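(* Let $n \geq 1$ be an integer and consider Nim on the hypercube $Q_{2n}$ in which every edge has weight $1$, with the playing piece $\Delta$ starting at the vertex $\emptyset$. Then the second player $P_2$ has a winning strategy.
   Context: Nim on a graph: two players agree on a finite simple undirected graph $G$ whose edges carry positive integer weights, and a starting vertex on which a playing piece $\Delta$ is placed. Players $P_1$ (who moves first) and $P_2$ alternate. On a turn, the player chooses an edge of positive weight incident with the vertex currently holding $\Delta$, lowers that edge's weight by a positive integer amount, and moves $\Delta$ to the other endpoint of that edge. Edges of weight $0$ are no longer playable. A player who cannot move (no playable edge is incident with $\Delta$) loses. With unit weight, each edge can be traversed at most once in total. The hypercube $Q_m$ has as vertices the subsets $X \subseteq \{1,\dots,m\}$, two vertices being adjacent iff they differ in exactly one element; $\emptyset$ denotes the empty set. *)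

theory Defs
  imports Main
begin

text \<open>The graph is given by its edge set E, a set of 2-element
  vertex sets. A position is a pair (w, v): edge weights w and the vertex v
  holding the playing piece. Weights of non-edges are irrelevant.\<close>

definition nim_move :: "'a set set \<Rightarrow> ('a set \<Rightarrow> nat) \<times> 'a \<Rightarrow> ('a set \<Rightarrow> nat) \<times> 'a \<Rightarrow> bool" where
  "nim_move E s s' \<longleftrightarrow>
     (\<exists>u k. {snd s, u} \<in> E \<and> u \<noteq> snd s \<and> 0 < k \<and> k \<le> fst s {snd s, u} \<and>
            s' = ((fst s)({snd s, u} := fst s {snd s, u} - k), u))"

inductive nim_win :: "'a set set \<Rightarrow> ('a set \<Rightarrow> nat) \<times> 'a \<Rightarrow> bool" for E where
  "nim_move E s s' \<Longrightarrow> (\<forall>s''. nim_move E s' s'' \<longrightarrow> nim_win E s'') \<Longrightarrow> nim_win E s"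

definition nim_second_wins :: "'a set set \<Rightarrow> ('a set \<Rightarrow> nat) \<times> 'a \<Rightarrow> bool" where
  "nim_second_wins E s \<longleftrightarrow> (\<forall>s'. nim_move E s s' \<longrightarrow> nim_win E s')"

definition hypercube_edges :: "nat \<Rightarrow> nat set set set" where
  "hypercube_edges m = {{X, Y} | X Y. X \<subseteq> {1..m} \<and> Y \<subseteq> {1..m} \<and>
                                     card ((X - Y) \<union> (Y - X)) = 1}"

definition unit_weights :: "'a set set \<Rightarrow> 'a set \<Rightarrow> nat" where
  "unit_weights E = (\<lambda>e. if e \<in> E then 1 else 0)"

end

theory Submission
  imports Defs
begin

definition pp :: "nat \<Rightarrow> nat" where "pp j = (if odd j then j+1 else j-1)"
definition fl :: "nat \<Rightarrow> nat set \<Rightarrow> nat set" where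
  "fl j X = (if j \<in> X then X - {j} else insert j X)"
definition bal :: "nat \<Rightarrow> nat set \<Rightarrow> bool" where
  "bal n X \<longleftrightarrow> X \<subseteq> {1..2*n} \<and> (\<forall>j\<in>{1..2*n}. j \<in> X \<longleftrightarrow> pp j \<in> X)"

lemma pp_range: "j \<in> {1..2*n} \<Longrightarrow> pp j \<in> {1..2*n}"
  unfolding pp_def by (auto, presburger)

lemma pp_ne: "j \<ge> 1 \<Longrightarrow> pp j \<noteq> j"
  unfolding pp_def by auto

lemma pp_pp: "j \<ge> 1 \<Longrightarrow> pp (pp j) = j"
  unfolding pp_def by auto

lemma fl_fl[simp]: "fl j (fl j X) = X"
  unfolding fl_def by auto

lemma fl_inj: "fl j X = fl k X \<Longrightarrow> j = k"
  unfolding fl_def by (auto split: if_splits)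

lemma fl_fl_id: "fl j (fl k X) = X \<Longrightarrow> j = k"
proof -
  assume "fl j (fl k X) = X"
  hence "fl j (fl j (fl k X)) = fl j X" by simp
  hence "fl k X = fl j X" by simp
  thus ?thesis using fl_inj by metis
qed

lemma fl_sub: "X \<subseteq> {1..m} \<Longrightarrow> j \<in> {1..m} \<Longrightarrow> fl j X \<subseteq> {1..m}"
  unfolding fl_def by auto

lemma fl_symd: "(X - fl j X) \<union> (fl j X - X) = {j}"
  unfolding fl_def by auto

lemma symd_fl: assumes h: "(X - Y) \<union> (Y - X) = {j}" shows "Y = fl j X"
proof -
  have a: "j \<in> Y \<longleftrightarrow> j \<notin> X" using h by blast
  have b: "\<forall>x. x \<noteq> j \<longrightarrow> (x \<in> Y \<longleftrightarrow> x \<in> X)" using h by blast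
  show ?thesis unfolding fl_def using a b by (cases "j \<in> X") auto
qed

lemma fl_edge:
  assumes "X \<subseteq> {1..m}" "j \<in> {1..m}" shows "{X, fl j X} \<in> hypercube_edges m"
proof -
  have s: "fl j X \<subseteq> {1..m}" using fl_sub[OF assms] .
  have c: "card ((X - fl j X) \<union> (fl j X - X)) = 1" unfolding fl_symd by simp
  show ?thesis unfolding hypercube_edges_def mem_Collect_eq
    by (rule exI[of _ X], rule exI[of _ "fl j X"]) (simp only: assms(1) s c simp_thms)
qed

lemma edge_dec:
  assumes "{B,u} \<in> hypercube_edges m"
  shows "\<exists>j\<in>{1..m}. u = fl j B"
proof -
  have "\<exists>X Y. {B,u} = {X,Y} \<and> X \<subseteq> {1..m} \<and> Y \<subseteq> {1..m} \<and>
    card ((X - Y) \<union> (Y - X)) = 1"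
    using assms unfolding hypercube_edges_def mem_Collect_eq by simp
  then obtain X Y where XY: "{B,u} = {X,Y}" "X \<subseteq> {1..m}" "Y \<subseteq> {1..m}"
    "card ((X - Y) \<union> (Y - X)) = 1" by (elim exE conjE)
  obtain j where j: "(X - Y) \<union> (Y - X) = {j}" using XY(4) by (rule card_1_singletonE)
  have "j \<in> (X - Y) \<union> (Y - X)" using j by simp
  hence jm: "j \<in> {1..m}" using XY(2,3) by blast
  have j2: "(Y - X) \<union> (X - Y) = {j}" using j by (simp add: Un_commute)
  have yf: "Y = fl j X" by (rule symd_fl[OF j])
  have xf: "X = fl j Y" by (rule symd_fl[OF j2])
  from XY(1) have "(B = X \<and> u = Y) \<or> (B = Y \<and> u = X)" by (simp add: doubleton_eq_iff)
  thus ?thesis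
  proof
    assume "B = X \<and> u = Y" thus ?thesis using yf jm by auto
  next
    assume "B = Y \<and> u = X" thus ?thesis using xf jm by auto
  qed
qed

lemma mem_fl: "i \<in> fl j X \<longleftrightarrow> (if i = j then i \<notin> X else i \<in> X)"
  unfolding fl_def by auto

lemma pp_eq: "i \<ge> 1 \<Longrightarrow> j \<ge> 1 \<Longrightarrow> (pp i = j \<longleftrightarrow> i = pp j)"
  unfolding pp_def by presburger

lemma bal_fl_not: "bal n B \<Longrightarrow> j \<in> {1..2*n} \<Longrightarrow> \<not> bal n (fl j B)"
proof
  assume a: "bal n B" "j \<in> {1..2*n}" "bal n (fl j B)"
  have "j \<in> fl j B \<longleftrightarrow> pp j \<in> fl j B" using a(2,3) unfolding bal_def by blast
  moreover have "pp j \<noteq> j" using pp_ne a(2) by auto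
  moreover have "j \<in> B \<longleftrightarrow> pp j \<in> B" using a(1,2) unfolding bal_def by blast
  ultimately show False by (auto simp: mem_fl)
qed

lemma bal_fl_fl: assumes "bal n B" "j \<in> {1..2*n}" shows "bal n (fl (pp j) (fl j B))"
proof -
  have pj: "pp j \<in> {1..2*n}" using pp_range assms(2) .
  have sub: "fl (pp j) (fl j B) \<subseteq> {1..2*n}"
    using fl_sub[OF fl_sub[OF _ assms(2)] pj] assms(1) unfolding bal_def by blast
  have "\<forall>i\<in>{1..2*n}. i \<in> fl (pp j) (fl j B) \<longleftrightarrow> pp i \<in> fl (pp j) (fl j B)"
  proof
    fix i assume i: "i \<in> {1..2*n}"
    have pi: "pp i \<in> {1..2*n}" using pp_range i .
    have b1: "i \<in> B \<longleftrightarrow> pp i \<in> B" using assms(1) i unfolding bal_def by blast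
    have b2: "j \<in> B \<longleftrightarrow> pp j \<in> B" using assms(1) assms(2) unfolding bal_def by blast
    have e1: "pp i = j \<longleftrightarrow> i = pp j" using pp_eq i assms(2) by auto
    have e2: "pp i = pp j \<longleftrightarrow> i = j" using pp_pp i assms(2) by (metis atLeastAtMost_iff)
    have n1: "pp j \<noteq> j" using pp_ne assms(2) by auto
    have n2: "pp i \<noteq> i" using pp_ne i by auto
    show "i \<in> fl (pp j) (fl j B) \<longleftrightarrow> pp i \<in> fl (pp j) (fl j B)"
      unfolding mem_fl using b1 b2 e1 e2 n1 n2 by auto
  qed
  thus ?thesis using sub unfolding bal_def by blast
qed

lemma fl_ne: "fl j X \<noteq> X"
  unfolding fl_def by auto

lemma edge_cases:
  assumes B: "bal n B" "j \<in> {1..2*n}" and B': "bal n B'" "j' \<in> {1..2*n}"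
  and u: "u = fl j B" and u': "u' = fl (pp j) u"
  shows "({B', fl j' B'} \<in> {{B,u},{u,u'}}) \<longleftrightarrow>
         ({fl j' B', fl (pp j') (fl j' B')} \<in> {{B,u},{u,u'}})"
proof -
  define H where "H = fl j' B'"
  have nH: "\<not> bal n H" unfolding H_def by (rule bal_fl_not[OF B'])
  have nu: "\<not> bal n u" unfolding u by (rule bal_fl_not[OF B])
  have bu': "bal n u'" unfolding u' u by (rule bal_fl_fl[OF B])
  have j1: "j \<ge> 1" "j' \<ge> 1" using B(2) B'(2) by simp_all
  have HB: "H \<noteq> B" proof assume "H = B" thus False using nH B(1) by simp qed
  have Hu': "H \<noteq> u'" proof assume "H = u'" thus False using nH bu' by simp qed
  have uB': "u \<noteq> B'" proof assume "u = B'" thus False using nu B'(1) by simp qed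
  have mem: "\<And>x. x \<in> {{B,u},{u,u'}} \<longleftrightarrow> x = {B,u} \<or> x = {u,u'}" by simp
  have L: "{B', H} \<in> {{B,u},{u,u'}} \<Longrightarrow> {H, fl (pp j') H} \<in> {{B,u},{u,u'}}"
  proof -
    assume "{B', H} \<in> {{B,u},{u,u'}}"
    hence "{B', H} = {B,u} \<or> {B',H} = {u,u'}" unfolding mem .
    thus "{H, fl (pp j') H} \<in> {{B,u},{u,u'}}"
    proof (elim disjE)
      assume 1: "{B', H} = {B,u}"
      have "(B' = B \<and> H = u) \<or> (B' = u \<and> H = B)" using 1 by (simp only: doubleton_eq_iff)
      hence hh: "B' = B" "H = u" using HB by blast+
      have "fl j' B = fl j B" using hh H_def u by simp
      hence "j' = j" by (rule fl_inj)
      hence "fl (pp j') H = u'" using hh u' by simp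
      hence "{H, fl (pp j') H} = {u,u'}" using hh by simp
      thus ?thesis unfolding mem by (rule disjI2)
    next
      assume 2: "{B',H} = {u,u'}"
      have "(B' = u \<and> H = u') \<or> (B' = u' \<and> H = u)" using 2 by (simp only: doubleton_eq_iff)
      hence hh: "B' = u'" "H = u" using uB' by blast+
      have "fl j' u' = u" using hh H_def by simp
      hence "fl j' (fl (pp j) u) = u" using u' by simp
      hence "j' = pp j" by (rule fl_fl_id)
      hence "pp j' = j" using pp_pp j1 by simp
      hence "fl (pp j') H = B" using hh u by simp
      hence "{H, fl (pp j') H} = {u,B}" using hh by simp
      hence "{H, fl (pp j') H} = {B,u}" by (simp only: insert_commute)
      thus ?thesis unfolding mem by (rule disjI1)
    qed
  qed
  have R: "{H, fl (pp j') H} \<in> {{B,u},{u,u'}} \<Longrightarrow> {B', H} \<in> {{B,u},{u,u'}}"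
  proof -
    assume "{H, fl (pp j') H} \<in> {{B,u},{u,u'}}"
    hence "{H, fl (pp j') H} = {B,u} \<or> {H, fl (pp j') H} = {u,u'}" unfolding mem .
    thus "{B', H} \<in> {{B,u},{u,u'}}"
    proof (elim disjE)
      assume 1: "{H, fl (pp j') H} = {B,u}"
      have "(H = B \<and> fl (pp j') H = u) \<or> (H = u \<and> fl (pp j') H = B)"
        using 1 by (simp only: doubleton_eq_iff)
      hence hh: "H = u" "fl (pp j') H = B" using HB by blast+
      hence "fl (pp j') (fl j B) = B" using u by simp
      hence "pp j' = j" by (rule fl_fl_id)
      hence "pp (pp j') = pp j" by simp
      hence jj: "j' = pp j" using pp_pp[OF j1(2)] by simp
      have "B' = fl j' H" using H_def by simp
      hence "B' = u'" using jj hh(1) u' by simp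
      hence "{B', H} = {u', u}" using hh(1) by simp
      hence "{B', H} = {u, u'}" by (simp only: insert_commute)
      thus ?thesis unfolding mem by (rule disjI2)
    next
      assume 2: "{H, fl (pp j') H} = {u,u'}"
      have "(H = u \<and> fl (pp j') H = u') \<or> (H = u' \<and> fl (pp j') H = u)"
        using 2 by (simp only: doubleton_eq_iff)
      hence hh: "H = u" "fl (pp j') H = u'" using Hu' by blast+
      hence "fl (pp j') u = fl (pp j) u" using u' by simp
      hence "pp j' = pp j" by (rule fl_inj)
      hence "pp (pp j') = pp (pp j)" by simp
      hence jj: "j' = j" using pp_pp[OF j1(1)] pp_pp[OF j1(2)] by simp
      have "B' = fl j' H" using H_def by simp
      hence "B' = B" using jj hh(1) u by simp
      hence "{B', H} = {B, u}" using hh(1) by simp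
      thus ?thesis unfolding mem by (rule disjI1)
    qed
  qed
  show ?thesis unfolding H_def[symmetric] by (rule iffI[OF L R])
qed

definition Inv :: "nat \<Rightarrow> (nat set set \<Rightarrow> nat) \<Rightarrow> nat set \<Rightarrow> bool" where
  "Inv n w V \<longleftrightarrow> bal n V \<and> (\<forall>e. w e \<le> 1) \<and>
     (\<forall>B j. bal n B \<and> j \<in> {1..2*n} \<longrightarrow> w {B, fl j B} = w {fl j B, fl (pp j) (fl j B)})"

lemma finite_edges: "finite (hypercube_edges m)"
proof -
  have "hypercube_edges m \<subseteq> Pow (Pow {1..m})" unfolding hypercube_edges_def by auto
  thus ?thesis by (rule finite_subset) simp
qed

lemma key:
  "Inv n w V \<Longrightarrow> card {e \<in> hypercube_edges (2*n). 0 < w e} = N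
   \<Longrightarrow> nim_second_wins (hypercube_edges (2*n)) (w, V)"
proof (induction N arbitrary: w V rule: less_induct)
  case (less N)
  let ?E = "hypercube_edges (2*n)"
  have bV: "bal n V" and w1: "\<And>e. w e \<le> 1"
    and weq: "\<And>B j. bal n B \<Longrightarrow> j \<in> {1..2*n} \<Longrightarrow> w {B, fl j B} = w {fl j B, fl (pp j) (fl j B)}"
    using less.prems(1) unfolding Inv_def by blast+
  show ?case unfolding nim_second_wins_def
  proof (intro allI impI)
    fix s' assume mv: "nim_move ?E (w, V) s'"
    have "\<exists>u k. {V,u} \<in> ?E \<and> u \<noteq> V \<and> 0 < k \<and> k \<le> w {V,u} \<and>
      s' = (w({V,u} := w {V,u} - k), u)"
      using mv unfolding nim_move_def by simp
    then obtain u k where uk: "{V,u} \<in> ?E" "u \<noteq> V" "0 < k" "k \<le> w {V,u}"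
      "s' = (w({V,u} := w {V,u} - k), u)" by (elim exE conjE)
    obtain j where j: "j \<in> {1..2*n}" "u = fl j V" using edge_dec[OF uk(1)] by blast
    define e where "e = {V,u}"
    define u' where "u' = fl (pp j) u"
    define e' where "e' = {u,u'}"
    have wle: "w {V,u} \<le> 1" by (rule w1)
    have we: "w e = 1" unfolding e_def using uk(3,4) wle by linarith
    have k1: "k = 1" using uk(3,4) wle by linarith
    have we': "w e' = 1"
    proof -
      have "w {V, fl j V} = w {fl j V, fl (pp j) (fl j V)}" by (rule weq[OF bV j(1)])
      hence "w e = w e'" unfolding e_def e'_def u'_def j(2) .
      thus ?thesis using we by simp
    qed
    have pj: "pp j \<in> {1..2*n}" using pp_range j(1) .
    have pjne: "pp j \<noteq> j" using pp_ne j(1) by auto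
    have u'V: "u' \<noteq> V"
    proof
      assume "u' = V"
      hence "fl (pp j) (fl j V) = V" using u'_def j(2) by simp
      hence "pp j = j" by (rule fl_fl_id)
      thus False using pjne by simp
    qed
    have ee': "e' \<noteq> e"
    proof
      assume "e' = e"
      hence "{u,u'} = {V,u}" unfolding e_def e'_def .
      hence "(u = V \<and> u' = u) \<or> (u = u \<and> u' = V)" by (simp only: doubleton_eq_iff)
      thus False using u'V uk(2) by blast
    qed
    have Vsub: "V \<subseteq> {1..2*n}" using bV unfolding bal_def by blast
    have usub: "u \<subseteq> {1..2*n}" unfolding j(2) by (rule fl_sub[OF Vsub j(1)])
    have e'E: "e' \<in> ?E" unfolding e'_def u'_def by (rule fl_edge[OF usub pj])
    have eE: "e \<in> ?E" using uk(1) unfolding e_def .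
    define w1' where "w1' = w(e := 0)"
    define w2 where "w2 = w(e := 0, e' := 0)"
    have w1e': "w1' e' = 1" unfolding w1'_def using ee' we' by simp
    have w2eq: "w2 = w1'(e' := w1' e' - 1)" unfolding w2_def w1'_def using ee' we' by simp
    have s'eq: "s' = (w1', u)" using uk(5) we k1 unfolding e_def w1'_def by simp
    have u'u: "u' \<noteq> u" unfolding u'_def by (rule fl_ne)
    have mv2: "nim_move ?E s' (w2, u')"
      unfolding nim_move_def s'eq fst_conv snd_conv
      apply (rule exI[of _ u'], rule exI[of _ 1])
      using e'E u'u w1e' w2eq unfolding e'_def by simp
    have bu': "bal n u'" unfolding u'_def j(2) by (rule bal_fl_fl[OF bV j(1)])
    have w2le: "\<And>x. w2 x \<le> 1" unfolding w2_def using w1 by simp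
    have Inv2: "Inv n w2 u'"
      unfolding Inv_def
    proof (intro conjI allI impI)
      show "bal n u'" by (rule bu')
      fix e0 show "w2 e0 \<le> 1" by (rule w2le)
    next
      fix B j0 assume a: "bal n B \<and> j0 \<in> {1..2*n}"
      have c: "({B, fl j0 B} \<in> {e, e'}) \<longleftrightarrow> ({fl j0 B, fl (pp j0) (fl j0 B)} \<in> {e, e'})"
        using edge_cases[OF bV j(1) conjunct1[OF a] conjunct2[OF a] j(2) u'_def]
        unfolding e_def e'_def .
      show "w2 {B, fl j0 B} = w2 {fl j0 B, fl (pp j0) (fl j0 B)}"
      proof (cases "{B, fl j0 B} \<in> {e, e'}")
        case True
        hence "{fl j0 B, fl (pp j0) (fl j0 B)} \<in> {e, e'}" using c by simp
        hence "w2 {fl j0 B, fl (pp j0) (fl j0 B)} = 0" unfolding w2_def by auto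
        moreover have "w2 {B, fl j0 B} = 0" using True unfolding w2_def by auto
        ultimately show ?thesis by simp
      next
        case False
        hence F2: "{fl j0 B, fl (pp j0) (fl j0 B)} \<notin> {e, e'}" using c by simp
        have "w2 {fl j0 B, fl (pp j0) (fl j0 B)} = w {fl j0 B, fl (pp j0) (fl j0 B)}"
          using F2 unfolding w2_def by simp
        moreover have "w2 {B, fl j0 B} = w {B, fl j0 B}" using False unfolding w2_def by simp
        ultimately show ?thesis using weq[OF conjunct1[OF a] conjunct2[OF a]] by simp
      qed
    qed
    have fin: "finite {x \<in> ?E. 0 < w x}" using finite_edges by simp
    have eA: "e \<in> {x \<in> ?E. 0 < w x}" using eE we by simp
    have s1: "{x \<in> ?E. 0 < w2 x} \<subseteq> {x \<in> ?E. 0 < w x} - {e}"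
    proof
      fix x assume x: "x \<in> {x \<in> ?E. 0 < w2 x}"
      hence "x \<noteq> e" unfolding w2_def by (auto split: if_splits)
      moreover have "0 < w x" using x unfolding w2_def by (auto split: if_splits)
      ultimately show "x \<in> {x \<in> ?E. 0 < w x} - {e}" using x by simp
    qed
    have "card {x \<in> ?E. 0 < w2 x} \<le> card ({x \<in> ?E. 0 < w x} - {e})"
      by (rule card_mono[OF _ s1]) (use fin in simp)
    also have "\<dots> < card {x \<in> ?E. 0 < w x}" by (rule card_Diff1_less[OF fin eA])
    finally have lt: "card {x \<in> ?E. 0 < w2 x} < N" using less.prems(2) by simp
    have sw: "nim_second_wins ?E (w2, u')" using less.IH[OF lt Inv2 refl] .
    show "nim_win ?E s'"
      by (rule nim_win.intros[OF mv2]) (rule sw[unfolded nim_second_wins_def])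
  qed
qed

theorem mainTheorem3:
  fixes n :: nat
  assumes "n \<ge> 1"
  shows "nim_second_wins (hypercube_edges (2 * n))
           (unit_weights (hypercube_edges (2 * n)), {})"
proof -
  let ?E = "hypercube_edges (2*n)"
  have "Inv n (unit_weights ?E) {}"
    unfolding Inv_def
  proof (intro conjI allI impI)
    show "bal n {}" unfolding bal_def by simp
    fix e show "unit_weights ?E e \<le> 1" unfolding unit_weights_def by simp
  next
    fix B j assume a: "bal n B \<and> j \<in> {1..2*n}"
    have Bs: "B \<subseteq> {1..2*n}" using a unfolding bal_def by blast
    have jj: "j \<in> {1..2*n}" using a by blast
    have pj: "pp j \<in> {1..2*n}" using pp_range jj .
    have "{B, fl j B} \<in> ?E" by (rule fl_edge[OF Bs jj])
    moreover have "{fl j B, fl (pp j) (fl j B)} \<in> ?E"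
      by (rule fl_edge[OF fl_sub[OF Bs jj] pj])
    ultimately show "unit_weights ?E {B, fl j B} = unit_weights ?E {fl j B, fl (pp j) (fl j B)}"
      unfolding unit_weights_def by simp
  qed
  thus ?thesis using key by blast
qed

end
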